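(* Let $\mathcal{F}=\{f_i\}_{i=1}^n$ be a basis for $\mathbb{R}^n$ and let $k$ be a positive integer. Then there exists a $k$-dimensional maximal $\mathcal{F}$-PR subspace if and only if $1\le k\le[(n+1)/2]$, where $[a]$ denotes the integer part of $a$.
   Context: A finite sequence $\{g_i\}$ in a subspace $M\subseteq\mathbb{R}^n$ is a phase-retrievable frame for $M$ if it spans $M$ and whenever $x,y\in M$ satisfy $|\langle x,g_i\rangle|=|\langle y,g_i\rangle|$ for all $i$, then $x=\pm y$. For a finite sequence $\mathcal{F}=\{f_i\}_{i=1}^N$ spanning $\mathbb{R}^n$, a subspace $M$ is an $\mathcal{F}$-PR subspace (phase-retrievable subspace with respect to $\mathcal{F}$) if $\{P_Mf_i\}_{i=1}^N$ is a phase-retrievable frame for $M$, where $P_M$ is the orthogonal projection onto $M$. An $\mathcal{F}$-PR subspace is maximal if it is not a proper subspace of another $\mathcal{F}$-PR subspace. *)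

theory Defs
  imports "HOL-Analysis.Analysis"
begin

definition orth_proj :: "'a::euclidean_space set \<Rightarrow> 'a \<Rightarrow> 'a" where
  "orth_proj M x = (THE y. y \<in> M \<and> (\<forall>z\<in>M. inner (x - y) z = 0))"

definition PR_frame :: "'a::euclidean_space set \<Rightarrow> ('i \<Rightarrow> 'a) \<Rightarrow> 'i set \<Rightarrow> bool" where
  "PR_frame M g I \<longleftrightarrow> finite I \<and> span (g ` I) = M \<and>
     (\<forall>x\<in>M. \<forall>y\<in>M. (\<forall>i\<in>I. \<bar>inner x (g i)\<bar> = \<bar>inner y (g i)\<bar>) \<longrightarrow> x = y \<or> x = - y)"

definition F_PR_subspace :: "('i \<Rightarrow> 'a::euclidean_space) \<Rightarrow> 'i set \<Rightarrow> 'a set \<Rightarrow> bool" where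
  "F_PR_subspace f I M \<longleftrightarrow> subspace M \<and> PR_frame M (\<lambda>i. orth_proj M (f i)) I"

definition maximal_F_PR_subspace :: "('i \<Rightarrow> 'a::euclidean_space) \<Rightarrow> 'i set \<Rightarrow> 'a set \<Rightarrow> bool" where
  "maximal_F_PR_subspace f I M \<longleftrightarrow> F_PR_subspace f I M \<and>
     \<not> (\<exists>M'. F_PR_subspace f I M' \<and> M \<subset> M')"

end

theory Submission
  imports Defs
begin

lemma orth_proj_props:
  fixes M :: "'a::euclidean_space set"
  assumes "subspace M"
  shows "orth_proj M v \<in> M \<and> (\<forall>z\<in>M. inner (v - orth_proj M v) z = 0)"
proof -
  obtain y z where y: "y \<in> span M" and z: "\<And>w. w \<in> span M \<Longrightarrow> orthogonal z w"
    and v: "v = y + z" using orthogonal_subspace_decomp_exists[of M v] by blast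
  have yM: "y \<in> M" using assms y span_minimal[of M M] by blast
  have ex: "y \<in> M \<and> (\<forall>w\<in>M. inner (v - y) w = 0)"
    using yM z v by (auto simp: orthogonal_def span_base)
  have uniq: "y' = y" if "y' \<in> M \<and> (\<forall>w\<in>M. inner (v - y') w = 0)" for y'
  proof -
    have d: "y - y' \<in> M" using that yM assms by (simp add: subspace_diff)
    have e1: "inner (v - y') (y - y') = 0" and e2: "inner (v - y) (y - y') = 0" using that ex d by auto
    have "inner (y - y') (y - y') = inner (v - y') (y - y') - inner (v - y) (y - y')"
      by (simp add: inner_diff_left)
    then have "inner (y - y') (y - y') = 0" using e1 e2 by simp
    then show ?thesis by simp
  qed
  have "orth_proj M v = y" unfolding orth_proj_def
    using ex uniq by (rule the_equality)
  then show ?thesis using ex by simp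
qed

lemma inner_orth_proj:
  fixes M :: "'a::euclidean_space set"
  assumes "subspace M" "x \<in> M"
  shows "inner x (orth_proj M v) = inner x v"
proof -
  have "inner (v - orth_proj M v) x = 0" using orth_proj_props[OF assms(1)] assms(2) by blast
  then have "inner x (v - orth_proj M v) = 0" by (simp add: inner_commute)
  then show ?thesis by (simp add: inner_diff_right)
qed

lemma zero_if_orth:
  fixes f :: "'i \<Rightarrow> 'a::euclidean_space"
  assumes "span (range f) = UNIV" "\<And>i. inner x (f i) = 0"
  shows "x = 0"
proof -
  have "orthogonal x x" by (rule orthogonal_to_span[of x "range f"]) (use assms in \<open>auto simp: orthogonal_def\<close>)
  then show ?thesis by (simp add: orthogonal_def)
qed

lemma span_proj:
  fixes f :: "'i \<Rightarrow> 'a::euclidean_space"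
  assumes sp: "span (range f) = UNIV" and M: "subspace M"
  shows "span (range (\<lambda>i. orth_proj M (f i))) = M"
proof
  show "span (range (\<lambda>i. orth_proj M (f i))) \<subseteq> M"
    by (rule span_minimal) (use orth_proj_props[OF M] M in auto)
next
  let ?S = "range (\<lambda>i. orth_proj M (f i))"
  show "M \<subseteq> span ?S"
  proof
    fix m assume m: "m \<in> M"
    obtain y z where y: "y \<in> span ?S" and z: "\<And>w. w \<in> span ?S \<Longrightarrow> orthogonal z w"
      and v: "m = y + z" using orthogonal_subspace_decomp_exists[of ?S m] by blast
    have sub: "span ?S \<subseteq> M"
      by (rule span_minimal) (use orth_proj_props[OF M] M in auto)
    have zM: "z \<in> M" using v m y sub M
      by (metis add_diff_cancel_left' subset_iff subspace_diff)
    have "inner z (f i) = 0" for i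
    proof -
      have "orthogonal z (orth_proj M (f i))" by (rule z) (auto intro: span_base)
      then show ?thesis using inner_orth_proj[OF M zM] by (simp add: orthogonal_def)
    qed
    then have "z = 0" using zero_if_orth[OF sp] by blast
    then show "m \<in> span ?S" using v y by simp
  qed
qed

lemma PR_iff:
  fixes f :: "'i::finite \<Rightarrow> 'a::euclidean_space"
  assumes sp: "span (range f) = UNIV" and M: "subspace M"
  shows "F_PR_subspace f UNIV M \<longleftrightarrow>
    \<not> (\<exists>a\<in>M. \<exists>b\<in>M. a \<noteq> 0 \<and> b \<noteq> 0 \<and> (\<forall>i. inner a (f i) * inner b (f i) = 0))"
proof -
  have eq: "(\<forall>x\<in>M. \<forall>y\<in>M. (\<forall>i\<in>UNIV. \<bar>inner x (orth_proj M (f i))\<bar> = \<bar>inner y (orth_proj M (f i))\<bar>) \<longrightarrow> x = y \<or> x = - y)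
     \<longleftrightarrow> (\<forall>x\<in>M. \<forall>y\<in>M. (\<forall>i. \<bar>inner x (f i)\<bar> = \<bar>inner y (f i)\<bar>) \<longrightarrow> x = y \<or> x = - y)"
    by (simp add: inner_orth_proj[OF M])
  have "(\<forall>x\<in>M. \<forall>y\<in>M. (\<forall>i. \<bar>inner x (f i)\<bar> = \<bar>inner y (f i)\<bar>) \<longrightarrow> x = y \<or> x = - y)
     \<longleftrightarrow> \<not> (\<exists>a\<in>M. \<exists>b\<in>M. a \<noteq> 0 \<and> b \<noteq> 0 \<and> (\<forall>i. inner a (f i) * inner b (f i) = 0))" (is "?A \<longleftrightarrow> ?B")
  proof safe
    fix a b assume H: "\<forall>x\<in>M. \<forall>y\<in>M. (\<forall>i. \<bar>inner x (f i)\<bar> = \<bar>inner y (f i)\<bar>) \<longrightarrow> x = y \<or> x = - y"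
      and a: "a \<in> M" "a \<noteq> 0" and b: "b \<in> M" "b \<noteq> 0" and d: "\<forall>i. inner a (f i) * inner b (f i) = 0"
    have "\<bar>inner (a + b) (f i)\<bar> = \<bar>inner (a - b) (f i)\<bar>" for i
      using d[rule_format, of i] by (auto simp: inner_add_left inner_diff_left)
    then have "a + b = a - b \<or> a + b = - (a - b)"
      using H a b M by (meson subspace_add subspace_diff)
    then have "b + b = 0 \<or> a + a = 0" by (auto simp: algebra_simps)
    then have "2 *\<^sub>R b = 0 \<or> 2 *\<^sub>R a = 0" by (simp add: scaleR_2)
    then show False using a b by simp
  next
    fix x y assume H: "\<not> (\<exists>a\<in>M. \<exists>b\<in>M. a \<noteq> 0 \<and> b \<noteq> 0 \<and> (\<forall>i. inner a (f i) * inner b (f i) = 0))"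
      and x: "x \<in> M" and y: "y \<in> M" and e: "\<forall>i. \<bar>inner x (f i)\<bar> = \<bar>inner y (f i)\<bar>" and n: "x \<noteq> - y"
    have "inner (x + y) (f i) * inner (x - y) (f i) = 0" for i
    proof -
      have "(inner x (f i))\<^sup>2 = (inner y (f i))\<^sup>2" using e by (metis power2_abs)
      then show ?thesis by (simp add: inner_add_left inner_diff_left algebra_simps power2_eq_square)
    qed
    moreover have "x + y \<noteq> 0" using n by (metis eq_neg_iff_add_eq_0)
    ultimately have "x - y = 0" using H x y M by (meson subspace_add subspace_diff)
    then show "x = y" by simp
  qed
  moreover have "F_PR_subspace f UNIV M \<longleftrightarrow> (\<forall>x\<in>M. \<forall>y\<in>M. (\<forall>i\<in>UNIV. \<bar>inner x (orth_proj M (f i))\<bar> = \<bar>inner y (orth_proj M (f i))\<bar>) \<longrightarrow> x = y \<or> x = - y)"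
    unfolding F_PR_subspace_def PR_frame_def using span_proj[OF sp M] M by simp
  ultimately show ?thesis using eq by simp
qed


lemma kernel_nonzero:
  fixes f :: "'n::finite \<Rightarrow> real^'n" and M :: "(real^'n) set"
  assumes M: "subspace M" and c: "card A < dim M"
  shows "\<exists>x\<in>M. x \<noteq> 0 \<and> (\<forall>i\<in>A. inner x (f i) = 0)"
proof (rule ccontr)
  assume H: "\<not> ?thesis"
  define L where "L = (\<lambda>x::real^'n. \<chi> i. if i \<in> A then inner x (f i) else 0)"
  have lin: "linear L" unfolding L_def
    by (auto simp: linear_iff vec_eq_iff inner_add_left)
  have inj: "inj_on L M" using linear_injective_on_subspace_0[OF lin M] H
    by (auto simp: L_def vec_eq_iff)
  have spM: "span M = M" using M by (simp add: span_eq_iff)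
  have d1: "dim (L ` M) = dim M" by (metis dim_image_eq[OF lin, of M] inj spM)
  have sub: "L ` M \<subseteq> {x. \<forall>b\<in>Basis. b \<notin> (\<lambda>i. axis i (1::real)) ` A \<longrightarrow> x \<bullet> b = 0}"
  proof clarify
    fix x b assume "x \<in> M" "b \<in> (Basis :: (real^'n) set)" "b \<notin> (\<lambda>i. axis i (1::real)) ` A"
    then obtain j where j: "b = axis j 1" "j \<notin> A" by (auto simp: Basis_vec_def)
    then show "L x \<bullet> b = 0" by (simp add: L_def inner_axis)
  qed
  have bs: "(\<lambda>i. axis i (1::real)) ` A \<subseteq> (Basis :: (real^'n) set)" by (auto simp: Basis_vec_def)
  have "dim (L ` M) \<le> card ((\<lambda>i. axis i (1::real)) ` A)"
    using dim_subset[OF sub] dim_substandard[OF bs] by simp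
  also have "\<dots> \<le> card A" by (rule card_image_le) simp
  finally show False using d1 c by simp
qed


lemma poly_zero_count:
  fixes g :: "'n \<Rightarrow> nat" and S :: "'n set"
  assumes injg: "inj g" and fin: "finite S"
    and c: "m + 1 \<le> card {i\<in>S. (\<Sum>j\<le>m. c j * real (g i) ^ j) = 0}"
  shows "\<forall>j\<le>m. c j = 0"
proof (rule ccontr)
  assume "\<not> (\<forall>j\<le>m. c j = 0)"
  then obtain j where j: "j \<le> m" "c j \<noteq> 0" by auto
  define R where "R = {z::real. (\<Sum>i\<le>m. c i * z ^ i) = 0}"
  have ex: "\<exists>k\<le>m. c k \<noteq> 0" using j by blast
  have R: "finite R" "card R \<le> m" using polyfun_rootbound[where n=m and c=c, OF ex] unfolding R_def by auto
  let ?Z = "{i\<in>S. (\<Sum>j\<le>m. c j * real (g i) ^ j) = 0}"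
  have im: "(\<lambda>i. real (g i)) ` ?Z \<subseteq> R" by (auto simp: R_def)
  have ij: "inj_on (\<lambda>i. real (g i)) ?Z" using injg by (auto simp: inj_on_def inj_def)
  have "card ?Z \<le> card R" by (rule card_inj_on_le[OF ij im R(1)])
  then show False using R(2) c by simp
qed

theorem proposition3p1:
  fixes f :: "'n::finite \<Rightarrow> real^'n" and k :: nat
  assumes "inj f" and "independent (range f)" and "span (range f) = UNIV"
    and "k > 0"
  shows "(\<exists>M. maximal_F_PR_subspace f UNIV M \<and> dim M = k) \<longleftrightarrow>
           1 \<le> k \<and> k \<le> (CARD('n) + 1) div 2"
proof
  assume "\<exists>M. maximal_F_PR_subspace f UNIV M \<and> dim M = k"
  then obtain M where mx: "maximal_F_PR_subspace f UNIV M" and dM: "dim M = k" by blast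
  have FM: "F_PR_subspace f UNIV M" using mx by (simp add: maximal_F_PR_subspace_def)
  then have sM: "subspace M" by (simp add: F_PR_subspace_def)
  have nd: "\<not> (\<exists>a\<in>M. \<exists>b\<in>M. a \<noteq> 0 \<and> b \<noteq> 0 \<and> (\<forall>i. inner a (f i) * inner b (f i) = 0))"
    using PR_iff[OF assms(3) sM] FM by blast
  show "1 \<le> k \<and> k \<le> (CARD('n) + 1) div 2"
  proof (rule ccontr)
    assume "\<not> (1 \<le> k \<and> k \<le> (CARD('n) + 1) div 2)"
    then have big: "CARD('n) + 2 \<le> 2 * k" using assms(4) by linarith
    have kle: "k \<le> CARD('n)" using dim_subset_UNIV_cart[of M] dM by simp
    have "k - 1 \<le> card (UNIV :: 'n set)" using kle by simp
    then obtain A :: "'n set" where A: "card A = k - 1" using obtain_subset_with_card_n by blast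
    have cB: "card (UNIV - A) = CARD('n) - (k - 1)" using A by (simp add: card_Diff_subset)
    obtain a where a: "a \<in> M" "a \<noteq> 0" "\<forall>i\<in>A. inner a (f i) = 0"
      using kernel_nonzero[OF sM, of A f] A dM assms(4) by auto
    have "card (UNIV - A) < dim M" using cB dM big by linarith
    then obtain b where b: "b \<in> M" "b \<noteq> 0" "\<forall>i\<in>UNIV - A. inner b (f i) = 0"
      using kernel_nonzero[OF sM, of "UNIV - A" f] by blast
    have "\<forall>i. inner a (f i) * inner b (f i) = 0"
    proof
      fix i show "inner a (f i) * inner b (f i) = 0" using a b by (cases "i \<in> A") auto
    qed
    then show False using nd a b by blast
  qed
next
  assume "1 \<le> k \<and> k \<le> (CARD('n) + 1) div 2"
  then have k2: "2 * k \<le> CARD('n) + 1" by linarith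
  define m where "m = k - 1"
  have km: "k = m + 1" using assms(4) by (simp add: m_def)
  have mn: "2 * m + 1 \<le> CARD('n)" using k2 km by simp
  obtain g where g: "bij_betw g (UNIV :: 'n set) {0..<CARD('n)}"
    using ex_bij_betw_finite_nat[of "UNIV :: 'n set"] by auto
  have injg: "inj g" using g by (simp add: bij_betw_def)
  have rg: "range g = {0..<CARD('n)}" using g by (simp add: bij_betw_def)
  define S where "S = {i. g i < 2 * m + 1}"
  have gS: "g ` S = {0..<2 * m + 1}"
  proof
    show "g ` S \<subseteq> {0..<2 * m + 1}" by (auto simp: S_def)
    show "{0..<2 * m + 1} \<subseteq> g ` S"
    proof
      fix y assume y: "y \<in> {0..<2 * m + 1}"
      then have "y \<in> range g" using rg mn by auto
      then obtain i where "y = g i" by auto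
      then show "y \<in> g ` S" using y by (auto simp: S_def)
    qed
  qed
  have fS: "finite S" by simp
  have cS: "card S = 2 * m + 1"
    using card_image[of g S] injg gS by (simp add: inj_on_def inj_def)
  define T where "T = (\<lambda>x::real^'n. \<chi> i. inner x (f i))"
  have linT: "linear T" unfolding T_def by (auto simp: linear_iff vec_eq_iff inner_add_left)
  have injT: "inj T"
  proof -
    have "inj_on T UNIV" using linear_injective_on_subspace_0[OF linT subspace_UNIV]
      zero_if_orth[OF assms(3)] by (auto simp: T_def vec_eq_iff)
    then show ?thesis by simp
  qed
  have surjT: "surj T" using linear_injective_imp_surjective[OF linT injT] by simp
  define Ti where "Ti = inv T"
  have coTi: "inner (Ti v) (f i) = v $ i" for v i
  proof -
    have "T (Ti v) = v" using surjT by (simp add: Ti_def surj_f_inv_f)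
    then show ?thesis by (metis T_def vec_lambda_beta)
  qed
  define X where "X = (\<lambda>j. Ti (\<chi> i. if i \<in> S then real (g i) ^ j else 0))"
  have coX: "inner (X j) (f i) = (if i \<in> S then real (g i) ^ j else 0)" for j i
    by (simp add: X_def coTi)
  define P where "P = {x. \<exists>c. \<forall>i. inner x (f i) = (if i \<in> S then \<Sum>j\<le>m. c j * real (g i) ^ j else 0)}"
  have subP: "subspace P" unfolding subspace_def
  proof (intro conjI ballI allI)
    show "0 \<in> P" unfolding P_def by (rule CollectI, rule exI[of _ "\<lambda>_. 0"]) simp
  next
    fix x y assume "x \<in> P" "y \<in> P"
    then obtain c d where c: "\<forall>i. inner x (f i) = (if i \<in> S then \<Sum>j\<le>m. c j * real (g i) ^ j else 0)"
      and d: "\<forall>i. inner y (f i) = (if i \<in> S then \<Sum>j\<le>m. d j * real (g i) ^ j else 0)"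
      unfolding P_def by blast
    show "x + y \<in> P" unfolding P_def
      by (rule CollectI, rule exI[of _ "\<lambda>j. c j + d j"])
        (simp add: inner_add_left c d sum.distrib distrib_right)
  next
    fix a :: real and x assume "x \<in> P"
    then obtain c where c: "\<forall>i. inner x (f i) = (if i \<in> S then \<Sum>j\<le>m. c j * real (g i) ^ j else 0)"
      unfolding P_def by blast
    show "a *\<^sub>R x \<in> P" unfolding P_def
      by (rule CollectI, rule exI[of _ "\<lambda>j. a * c j"])
        (simp add: c sum_distrib_left mult.assoc)
  qed
  define M where "M = span (X ` {..m})"
  have XP: "X j \<in> P" if "j \<le> m" for j
  proof -
    have "(\<Sum>l\<le>m. (if l = j then 1 else 0) * t ^ l) = t ^ j" for t :: real
    proof -
      have "(\<Sum>l\<le>m. (if l = j then 1 else 0) * t ^ l) = (\<Sum>l\<le>m. if l = j then t ^ l else 0)"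
        by (rule sum.cong) auto
      also have "\<dots> = t ^ j" using that by simp
      finally show ?thesis .
    qed
    then show ?thesis unfolding P_def
      by (intro CollectI exI[of _ "\<lambda>l. if l = j then 1 else 0"]) (simp add: coX)
  qed
  have MP: "M \<subseteq> P" unfolding M_def by (rule span_minimal) (use XP subP in auto)
  have outside: "inner x (f i) = 0" if "x \<in> M" "i \<notin> S" for x i
    using that MP by (auto simp: P_def)
  have Z: "x = 0" if x: "x \<in> M" and cz: "m + 1 \<le> card {i\<in>S. inner x (f i) = 0}" for x
  proof -
    obtain c where c: "\<forall>i. inner x (f i) = (if i \<in> S then \<Sum>j\<le>m. c j * real (g i) ^ j else 0)"
      using x MP by (auto simp: P_def)
    have eqZ: "{i\<in>S. inner x (f i) = 0} = {i\<in>S. (\<Sum>j\<le>m. c j * real (g i) ^ j) = 0}" using c by auto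
    have "m + 1 \<le> card {i\<in>S. (\<Sum>j\<le>m. c j * real (g i) ^ j) = 0}" using cz unfolding eqZ .
    then have "\<forall>j\<le>m. c j = 0" by (rule poly_zero_count[OF injg fS])
    then have "inner x (f i) = 0" for i using c by simp
    then show ?thesis using zero_if_orth[OF assms(3)] by blast
  qed
  have injX: "inj_on X {..m}"
  proof (rule inj_onI)
    fix j j' assume j: "j \<in> {..m}" and j': "j' \<in> {..m}" and e: "X j = X j'"
    define c where "c = (\<lambda>l. (if l = j then 1 else 0) - (if l = j' then 1 else (0::real)))"
    have "(\<Sum>l\<le>m. c l * t ^ l) = t ^ j - t ^ j'" for t :: real
    proof -
      have "(\<Sum>l\<le>m. c l * t ^ l) = (\<Sum>l\<le>m. (if l = j then t ^ l else 0) - (if l = j' then t ^ l else 0))"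
        by (rule sum.cong) (auto simp: c_def)
      also have "\<dots> = t ^ j - t ^ j'" using j j' by (simp add: sum_subtractf)
      finally show ?thesis .
    qed
    then have "{i\<in>S. (\<Sum>l\<le>m. c l * real (g i) ^ l) = 0} = S"
      using e coX by auto (metis coX)
    then have "m + 1 \<le> card {i\<in>S. (\<Sum>l\<le>m. c l * real (g i) ^ l) = 0}" using cS by simp
    then have "\<forall>l\<le>m. c l = 0" by (rule poly_zero_count[OF injg fS])
    then have "c j = 0" using j by simp
    then show "j = j'" by (auto simp: c_def split: if_splits)
  qed
  have indep: "independent (X ` {..m})"
  proof (rule independent_if_scalars_zero)
    show "finite (X ` {..m})" by simp
  next
    fix u x assume su: "(\<Sum>x\<in>X ` {..m}. u x *\<^sub>R x) = 0" and x: "x \<in> X ` {..m}"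
    have s2: "(\<Sum>j\<le>m. u (X j) *\<^sub>R X j) = 0" using su sum.reindex[OF injX, of "\<lambda>x. u x *\<^sub>R x"] by simp
    have "(\<Sum>j\<le>m. u (X j) * real (g i) ^ j) = 0" if "i \<in> S" for i
    proof -
      have "inner (\<Sum>j\<le>m. u (X j) *\<^sub>R X j) (f i) = 0" using s2 by simp
      then show ?thesis using that by (simp add: inner_sum_left coX)
    qed
    then have "{i\<in>S. (\<Sum>j\<le>m. u (X j) * real (g i) ^ j) = 0} = S" by auto
    then have "m + 1 \<le> card {i\<in>S. (\<Sum>j\<le>m. u (X j) * real (g i) ^ j) = 0}" using cS by simp
    then have "\<forall>j\<le>m. u (X j) = 0" by (rule poly_zero_count[OF injg fS])
    then show "u x = 0" using x by auto
  qed
  have dimM: "dim M = k" unfolding M_def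
    using dim_span_eq_card_independent[OF indep] card_image[OF injX] km by simp
  have sM: "subspace M" unfolding M_def by (rule subspace_span)
  have noDis: "\<not> (\<exists>a\<in>M. \<exists>b\<in>M. a \<noteq> 0 \<and> b \<noteq> 0 \<and> (\<forall>i. inner a (f i) * inner b (f i) = 0))"
  proof
    assume "\<exists>a\<in>M. \<exists>b\<in>M. a \<noteq> 0 \<and> b \<noteq> 0 \<and> (\<forall>i. inner a (f i) * inner b (f i) = 0)"
    then obtain a b where a: "a \<in> M" "a \<noteq> 0" and b: "b \<in> M" "b \<noteq> 0"
      and d: "\<forall>i. inner a (f i) * inner b (f i) = 0" by blast
    have c1: "card {i\<in>S. inner b (f i) = 0} \<le> m" using Z[OF b(1)] b(2) by linarith
    have un: "{i\<in>S. inner b (f i) = 0} \<union> {i\<in>S. inner b (f i) \<noteq> 0} = S" by auto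
    have "card ({i\<in>S. inner b (f i) = 0} \<union> {i\<in>S. inner b (f i) \<noteq> 0})
       = card {i\<in>S. inner b (f i) = 0} + card {i\<in>S. inner b (f i) \<noteq> 0}"
      by (rule card_Un_disjoint) auto
    then have "card {i\<in>S. inner b (f i) = 0} + card {i\<in>S. inner b (f i) \<noteq> 0} = card S"
      unfolding un by simp
    then have c2: "m + 1 \<le> card {i\<in>S. inner b (f i) \<noteq> 0}" using c1 cS by linarith
    have "{i\<in>S. inner b (f i) \<noteq> 0} \<subseteq> {i\<in>S. inner a (f i) = 0}" using d by auto
    then have "card {i\<in>S. inner b (f i) \<noteq> 0} \<le> card {i\<in>S. inner a (f i) = 0}"
      by (rule card_mono[rotated]) simp
    then have "a = 0" using Z[OF a(1)] c2 by linarith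
    then show False using a by simp
  qed
  have FM: "F_PR_subspace f UNIV M" using PR_iff[OF assms(3) sM] noDis by blast
  have maxM: "\<not> (\<exists>M'. F_PR_subspace f UNIV M' \<and> M \<subset> M')"
  proof
    assume "\<exists>M'. F_PR_subspace f UNIV M' \<and> M \<subset> M'"
    then obtain M' where F': "F_PR_subspace f UNIV M'" and ps: "M \<subset> M'" by blast
    have sM': "subspace M'" using F' by (simp add: F_PR_subspace_def)
    have e1: "span M = M" using sM by (simp add: span_eq_iff)
    have e2: "span M' = M'" using sM' by (simp add: span_eq_iff)
    have "span M \<subset> span M'" unfolding e1 e2 by (rule ps)
    then have dlt: "dim M < dim M'" by (rule dim_psubset)
    obtain C where C: "C \<subseteq> S" "card C = m + 1" "finite C"
      using obtain_subset_with_card_n[of "m + 1" S] cS by auto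
    obtain u where u: "u \<in> M'" "u \<noteq> 0" "\<forall>i\<in>C. inner u (f i) = 0"
      using kernel_nonzero[OF sM', of C f] C dlt dimM km by auto
    have cSC: "card (S - C) = m" using C cS by (simp add: card_Diff_subset)
    obtain v where v: "v \<in> M" "v \<noteq> 0" "\<forall>i\<in>S - C. inner v (f i) = 0"
      using kernel_nonzero[OF sM, of "S - C" f] cSC dimM km by auto
    have "\<forall>i. inner v (f i) * inner u (f i) = 0"
    proof
      fix i show "inner v (f i) * inner u (f i) = 0"
        using u v outside[OF v(1), of i] by (cases "i \<in> C"; cases "i \<in> S") auto
    qed
    moreover have "v \<in> M'" using v ps by auto
    ultimately show False using PR_iff[OF assms(3) sM'] F' u v by blast
  qed
  show "\<exists>M. maximal_F_PR_subspace f UNIV M \<and> dim M = k"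
    using FM maxM dimM by (auto simp: maximal_F_PR_subspace_def)
qed

end
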